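(* For every integer $n \geq -1$, $q_n(x) = 2^{n+1} F_{n+1}(x, 1/2)$. Equivalently, as formal power series in $t$, \[ \sum_{n=0}^\infty q_{n-1}(x) \frac{t^n}{n!} = \mathscr{F}(x,1/2;2t) = \left(\frac{1-x}{e^{2t(x-1)}-x}\right)^{1/2}. \]
   Context: Define polynomial sequences $(p_k(x))_{k\ge -1}$ and $(q_k(x))_{k\ge -1}$ by $p_{-1}(x)=0$, $q_{-1}(x)=1$ and, for $k\ge -1$, $p_{k+1}(x) = 2(kx+1)p_k(x) + 2x(1-x)p_k'(x) + q_k(x)$, $q_{k+1}(x) = (2(k+1)x+1)q_k(x) + 2x(1-x)q_k'(x)$. For a permutation $\pi=\pi_1\cdots\pi_n$ of $[n]=\{1,\dots,n\}$, let $\mathrm{exc}(\pi)=|\{i\in[n]:\pi_i>i\}|$ and $\mathrm{cyc}(\pi)$ the number of cycles in its disjoint cycle decomposition. The bivariate Eulerian polynomials are $F_0(x,y)=1$ and $F_n(x,y)=\sum_{\pi\in\mathfrak S_n} x^{\mathrm{exc}(\pi)}y^{\mathrm{cyc}(\pi)}$ for $n>0$, where $\mathfrak S_n$ is the symmetric group on $[n]$; their exponential generating function is $\mathscr{F}(x,y;t)=\sum_{n\ge0}F_n(x,y)t^n/n! = \left(\frac{1-x}{e^{t(x-1)}-x}\right)^y$. *)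

theory Defs
  imports Complex_Main "HOL-Computational_Algebra.Polynomial"
    "HOL-Combinatorics.Permutations" "HOL-Combinatorics.Orbits"
begin

text \<open>PP m = p_(m-1), QQ m = q_(m-1), i.e. shifted by one so that the index is a nat.
  In the recursion, k = m - 1 (as an integer).\<close>
fun PQ :: "nat \<Rightarrow> real poly \<times> real poly" where
  "PQ 0 = (0, 1)"
| "PQ (Suc m) =
     (let (p, q) = PQ m; k = real_of_int (int m - 1) in
       (smult 2 [:1, k:] * p + [:0, 2, -2:] * pderiv p + q,
        [:1, 2 * (k + 1):] * q + [:0, 2, -2:] * pderiv q))"

definition p_seq :: "int \<Rightarrow> real poly" where
  "p_seq k = fst (PQ (nat (k + 1)))"

definition q_seq :: "int \<Rightarrow> real poly" where
  "q_seq k = snd (PQ (nat (k + 1)))"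

definition exc :: "nat \<Rightarrow> (nat \<Rightarrow> nat) \<Rightarrow> nat" where
  "exc n \<pi> = card {i \<in> {1..n}. \<pi> i > i}"

definition cyc :: "nat \<Rightarrow> (nat \<Rightarrow> nat) \<Rightarrow> nat" where
  "cyc n \<pi> = card ((\<lambda>i. orbit \<pi> i) ` {1..n})"

definition F_biv :: "nat \<Rightarrow> real \<Rightarrow> real \<Rightarrow> real" where
  "F_biv n x y = (\<Sum>\<pi> \<in> {\<pi>. \<pi> permutes {1..n}}. x ^ exc n \<pi> * y ^ cyc n \<pi>)"

end

theory Submission imports Defs begin
lemma same_orbit:
  assumes "permutation f" "y \<in> orbit f x" shows "orbit f y = orbit f x"
  using orbit_cyclic_eq3[OF cyclic_on_orbit'[OF assms(1)] assms(2)] .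

locale ins =
  fixes n :: nat and \<pi> :: "nat \<Rightarrow> nat" and b :: nat
  assumes perm: "\<pi> permutes {1..n}" and b: "b \<in> {1..n}"
begin
definition "\<sigma> = transpose (Suc n) b \<circ> \<pi>"
definition "a = inv \<pi> b"

lemma pi_N: "\<pi> (Suc n) = Suc n" using perm by (simp add: permutes_not_in)
lemma a_in: "a \<in> {1..n}" unfolding a_def
  using permutes_in_image[OF permutes_inv[OF perm]] b by blast
lemma pi_a: "\<pi> a = b" unfolding a_def using perm permutes_inverses(1) by fast
lemma sig_a: "\<sigma> a = Suc n" by (simp add: \<sigma>_def pi_a)
lemma sig_N: "\<sigma> (Suc n) = b" using b by (simp add: \<sigma>_def pi_N)
lemma sig_other: "y \<noteq> a \<Longrightarrow> y \<noteq> Suc n \<Longrightarrow> \<sigma> y = \<pi> y"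
proof -
  assume h: "y \<noteq> a" "y \<noteq> Suc n"
  have "\<pi> y \<noteq> b" using h(1) pi_a permutes_inj[OF perm] by (metis inj_eq)
  moreover have "\<pi> y \<noteq> Suc n" using h(2) pi_N permutes_inj[OF perm] by (metis inj_eq)
  ultimately show ?thesis by (simp add: \<sigma>_def)
qed
lemma sig_perm: "\<sigma> permutes {1..Suc n}"
proof -
  have "\<pi> permutes {1..Suc n}" using perm by (rule permutes_subset) auto
  moreover have "transpose (Suc n) b permutes {1..Suc n}" using b
    by (intro permutes_swap_id) auto
  ultimately show ?thesis unfolding \<sigma>_def by (rule permutes_compose)
qed
lemma sig_permutation: "permutation \<sigma>" unfolding permutation_permutes using sig_perm finite_atLeastAtMost by blast
lemma pi_permutation: "permutation \<pi>" unfolding permutation_permutes using perm finite_atLeastAtMost by blast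

lemma orb_pi_sub: "i \<in> {1..n} \<Longrightarrow> orbit \<pi> i \<subseteq> {1..n}"
  using permutes_orbit_subset[OF perm] by blast

definition "i' i = (if i = Suc n then b else i)"

lemma i'_in: "i \<in> {1..Suc n} \<Longrightarrow> i' i \<in> {1..n}" using b by (auto simp: i'_def)

lemma i'_orb: "i \<in> {1..Suc n} \<Longrightarrow> i' i \<in> orbit \<sigma> i"
proof (cases "i = Suc n")
  case True
  then show ?thesis using orbit.base[of \<sigma> i] sig_N by (simp add: i'_def)
next
  case False
  then show ?thesis using permutation_self_in_orbit[OF sig_permutation, of i] by (simp add: i'_def)
qed

lemma orb1: assumes "i \<in> {1..Suc n}" "y \<in> orbit \<pi> (i' i)" shows "y \<in> orbit \<sigma> i"
  using assms(2)
proof induct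
  case base
  have z: "i' i \<in> orbit \<sigma> i" using i'_orb assms(1) .
  show ?case
  proof (cases "i' i = a")
    case True
    then show ?thesis using z sig_a sig_N pi_a by (metis orbit.step)
  next
    case False
    then show ?thesis using z sig_other i'_in[OF assms(1)] by (metis orbit.step atLeastAtMost_iff not_less_eq_eq order_refl)
  qed
next
  case (step y)
  have yin: "y \<in> {1..n}" using step(1) orb_pi_sub i'_in[OF assms(1)] by blast
  show ?case
  proof (cases "y = a")
    case True
    then show ?thesis using step(2) sig_a sig_N pi_a by (metis orbit.step)
  next
    case False
    then show ?thesis using step(2) sig_other yin by (metis orbit.step atLeastAtMost_iff not_less_eq_eq order_refl)
  qed
qed

lemma orb2: assumes "i \<in> {1..Suc n}" "y \<in> orbit \<sigma> i"
  shows "(y = Suc n \<longrightarrow> b \<in> orbit \<pi> (i' i)) \<and> (y \<noteq> Suc n \<longrightarrow> y \<in> orbit \<pi> (i' i))"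
  using assms(2)
proof induct
  case base
  have self: "\<And>z. z \<in> orbit \<pi> z" using permutation_self_in_orbit[OF pi_permutation] .
  show ?case
  proof (cases "i = Suc n")
    case True then show ?thesis using sig_N b self by (auto simp: i'_def)
  next
    case F: False
    show ?thesis
    proof (cases "i = a")
      case True then show ?thesis using sig_a pi_a F orbit.base[of \<pi> a] by (auto simp: i'_def)
    next
      case False
      have "\<pi> i \<noteq> Suc n" using pi_N permutes_inj[OF perm] F by (metis inj_eq)
      then show ?thesis using sig_other[OF False F] orbit.base[of \<pi> i] F by (simp add: i'_def)
    qed
  qed
next
  case (step y)
  show ?case
  proof (cases "y = Suc n")
    case True then show ?thesis using step sig_N b by auto
  next
    case F: False
    show ?thesis
    proof (cases "y = a")
      case True then show ?thesis using step sig_a pi_a F orbit.step[of a \<pi> "i' i"] by auto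
    next
      case False
      have "\<pi> y \<noteq> Suc n" using pi_N permutes_inj[OF perm] F by (metis inj_eq)
      then show ?thesis using step sig_other[OF False F] F orbit.step[of y \<pi> "i' i"] by auto
    qed
  qed
qed

lemma orb_eq: assumes "i \<in> {1..Suc n}" shows "orbit \<sigma> i - {Suc n} = orbit \<pi> (i' i)"
proof -
  have "Suc n \<notin> orbit \<pi> (i' i)" using orb_pi_sub i'_in[OF assms] by fastforce
  then show ?thesis using orb1[OF assms] orb2[OF assms] by blast
qed

lemma cyc_eq: "cyc (Suc n) \<sigma> = cyc n \<pi>"
proof -
  let ?U = "(\<lambda>i. orbit \<sigma> i) ` {1..Suc n}"
  have img: "(\<lambda>U. U - {Suc n}) ` ?U = (\<lambda>i. orbit \<pi> i) ` {1..n}"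
  proof
    show "(\<lambda>U. U - {Suc n}) ` ?U \<subseteq> (\<lambda>i. orbit \<pi> i) ` {1..n}"
      using orb_eq i'_in by fastforce
    show "(\<lambda>i. orbit \<pi> i) ` {1..n} \<subseteq> (\<lambda>U. U - {Suc n}) ` ?U"
    proof
      fix U assume "U \<in> (\<lambda>i. orbit \<pi> i) ` {1..n}"
      then obtain i where i: "i \<in> {1..n}" "U = orbit \<pi> i" by blast
      have "i' i = i" using i by (auto simp: i'_def)
      then have "U = orbit \<sigma> i - {Suc n}" using orb_eq[of i] i by auto
      then show "U \<in> (\<lambda>U. U - {Suc n}) ` ?U" using i by auto
    qed
  qed
  have inj: "inj_on (\<lambda>U. U - {Suc n}) ?U"
  proof (rule inj_onI)
    fix U1 U2 assume "U1 \<in> ?U" "U2 \<in> ?U" and eq: "U1 - {Suc n} = U2 - {Suc n}"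
    then obtain i1 i2 where i: "i1 \<in> {1..Suc n}" "U1 = orbit \<sigma> i1" "i2 \<in> {1..Suc n}" "U2 = orbit \<sigma> i2" by blast
    have "i' i1 \<in> U1 - {Suc n}" using i'_orb[OF i(1)] i'_in[OF i(1)] i(2) by auto
    then have "i' i1 \<in> U2" using eq by blast
    then have "orbit \<sigma> (i' i1) = U2" using same_orbit[OF sig_permutation] i(4) by blast
    moreover have "orbit \<sigma> (i' i1) = U1" using same_orbit[OF sig_permutation i'_orb[OF i(1)]] i(2) by blast
    ultimately show "U1 = U2" by simp
  qed
  show ?thesis unfolding cyc_def using card_image[OF inj] img by simp
qed

lemma exc_eq: "exc (Suc n) \<sigma> = exc n \<pi> + (if \<pi> a > a then 0 else 1)"
proof -
  have set: "{i \<in> {1..Suc n}. \<sigma> i > i} = insert a {i \<in> {1..n}. \<pi> i > i}"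
  proof (intro set_eqI iffI)
    fix i assume "i \<in> {i \<in> {1..Suc n}. \<sigma> i > i}"
    then show "i \<in> insert a {i \<in> {1..n}. \<pi> i > i}" using sig_N b sig_other
      by (cases "i = a"; cases "i = Suc n") (auto)
  next
    fix i assume "i \<in> insert a {i \<in> {1..n}. \<pi> i > i}"
    then show "i \<in> {i \<in> {1..Suc n}. \<sigma> i > i}" using sig_a a_in sig_other
      by (cases "i = a") auto
  qed
  show ?thesis unfolding exc_def set using a_in by (auto simp: card_insert_if)
qed
end

lemma fixed_case:
  assumes perm: "\<pi> permutes {1..n}"
  shows "exc (Suc n) \<pi> = exc n \<pi>" "cyc (Suc n) \<pi> = Suc (cyc n \<pi>)"
proof -
  have pN: "\<pi> (Suc n) = Suc n" using perm by (simp add: permutes_not_in)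
  have "{i \<in> {1..Suc n}. \<pi> i > i} = {i \<in> {1..n}. \<pi> i > i}"
    using pN by (auto simp: le_Suc_eq)
  then show "exc (Suc n) \<pi> = exc n \<pi>" by (simp add: exc_def)
  have ins: "{1..Suc n} = insert (Suc n) {1..n}" by auto
  have o: "orbit \<pi> (Suc n) = {Suc n}" using pN by (simp add: orbit_eq_singleton_iff)
  have "{Suc n} \<notin> (\<lambda>i. orbit \<pi> i) ` {1..n}"
  proof
    assume "{Suc n} \<in> (\<lambda>i. orbit \<pi> i) ` {1..n}"
    then obtain i where "i \<in> {1..n}" "orbit \<pi> i = {Suc n}" by auto
    then show False using permutes_orbit_subset[OF perm, of i] by auto
  qed
  then show "cyc (Suc n) \<pi> = Suc (cyc n \<pi>)" unfolding cyc_def ins using o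
    by (simp add: card_insert_if)
qed

definition Fpoly :: "nat \<Rightarrow> real \<Rightarrow> real poly" where
  "Fpoly n y = (\<Sum>\<pi> \<in> {\<pi>. \<pi> permutes {1..n}}. smult (y ^ cyc n \<pi>) (monom 1 (exc n \<pi>)))"

lemma poly_Fpoly: "poly (Fpoly n y) x = F_biv n x y"
  by (simp add: Fpoly_def F_biv_def poly_sum poly_monom mult.commute)

lemma Fpoly_0: "Fpoly 0 y = 1"
proof -
  have "{\<pi>. \<pi> permutes {1..0::nat}} = {id}" by (auto simp: permutes_empty)
  moreover have "cyc 0 id = 0" "exc 0 id = 0" by (auto simp: cyc_def exc_def)
  ultimately show ?thesis by (simp add: Fpoly_def one_poly_def monom_0)
qed

lemma monom_identity:
  "[:y, real n:] * monom 1 e + [:0,1,-1:] * pderiv (monom 1 e) =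
   smult y (monom 1 e) + smult (real e) (monom 1 e) + smult (real n - real e) (monom 1 (Suc e))"
proof -
  have "poly ([:y, real n:] * monom 1 e + [:0,1,-1:] * pderiv (monom 1 e)) x =
     poly (smult y (monom 1 e) + smult (real e) (monom 1 e) + smult (real n - real e) (monom 1 (Suc e))) x" for x
  proof (cases e)
    case 0 then show ?thesis by (simp add: pderiv_monom poly_monom algebra_simps)
  next
    case (Suc k) then show ?thesis by (simp add: pderiv_monom poly_monom algebra_simps)
  qed
  then show ?thesis using poly_eq_poly_eq_iff by blast
qed

lemma inner_sum:
  assumes perm: "\<pi> permutes {1..n}"
  shows "(\<Sum>b\<in>{1..n}. smult (y ^ cyc (Suc n) (transpose (Suc n) b \<circ> \<pi>))
            (monom 1 (exc (Suc n) (transpose (Suc n) b \<circ> \<pi>))))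
       = smult (y ^ cyc n \<pi>) (smult (real (exc n \<pi>)) (monom 1 (exc n \<pi>))
            + smult (real n - real (exc n \<pi>)) (monom 1 (Suc (exc n \<pi>))))"
proof -
  let ?e = "exc n \<pi>" and ?c = "cyc n \<pi>"
  have "(\<Sum>b\<in>{1..n}. smult (y ^ cyc (Suc n) (transpose (Suc n) b \<circ> \<pi>))
            (monom 1 (exc (Suc n) (transpose (Suc n) b \<circ> \<pi>))))
     = (\<Sum>b\<in>{1..n}. smult (y ^ ?c) (monom 1 (?e + (if \<pi> (inv \<pi> b) > inv \<pi> b then 0 else 1))))"
  proof (rule sum.cong[OF refl])
    fix b assume b: "b \<in> {1..n}"
    interpret ins n \<pi> b using perm b by unfold_locales
    show "smult (y ^ cyc (Suc n) (transpose (Suc n) b \<circ> \<pi>))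
            (monom 1 (exc (Suc n) (transpose (Suc n) b \<circ> \<pi>))) =
          smult (y ^ ?c) (monom 1 (?e + (if \<pi> (inv \<pi> b) > inv \<pi> b then 0 else 1)))"
      using cyc_eq exc_eq unfolding \<sigma>_def a_def by simp
  qed
  also have "\<dots> = (\<Sum>a\<in>{1..n}. smult (y ^ ?c) (monom 1 (?e + (if \<pi> a > a then 0 else 1))))"
  proof -
    have inj: "inj_on \<pi> {1..n}" using permutes_inj[OF perm] by (auto intro: inj_on_subset)
    have img: "\<pi> ` {1..n} = {1..n}" using permutes_image[OF perm] .
    have "(\<Sum>b\<in>{1..n}. smult (y ^ ?c) (monom 1 (?e + (if \<pi> (inv \<pi> b) > inv \<pi> b then 0 else 1))))
        = (\<Sum>b\<in>\<pi> ` {1..n}. smult (y ^ ?c) (monom 1 (?e + (if \<pi> (inv \<pi> b) > inv \<pi> b then 0 else 1))))"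
      using img by simp
    also have "\<dots> = (\<Sum>a\<in>{1..n}. smult (y ^ ?c) (monom 1 (?e + (if \<pi> (inv \<pi> (\<pi> a)) > inv \<pi> (\<pi> a) then 0 else 1))))"
      using sum.reindex[OF inj] by simp
    also have "\<dots> = (\<Sum>a\<in>{1..n}. smult (y ^ ?c) (monom 1 (?e + (if \<pi> a > a then 0 else 1))))"
      using permutes_inverses(2)[OF perm] by simp
    finally show ?thesis .
  qed
  also have "\<dots> = (\<Sum>a\<in>{1..n}. if \<pi> a > a then smult (y ^ ?c) (monom 1 ?e) else smult (y ^ ?c) (monom 1 (Suc ?e)))"
    by (rule sum.cong) auto
  also have "\<dots> = (\<Sum>a\<in>{1..n} \<inter> {a. \<pi> a > a}. smult (y ^ ?c) (monom 1 ?e))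
      + (\<Sum>a\<in>{1..n} \<inter> - {a. \<pi> a > a}. smult (y ^ ?c) (monom 1 (Suc ?e)))"
    by (rule sum.If_cases) simp
  also have "\<dots> = of_nat ?e * smult (y ^ ?c) (monom 1 ?e) + of_nat (n - ?e) * smult (y ^ ?c) (monom 1 (Suc ?e))"
  proof -
    have c1: "card ({1..n} \<inter> {a. \<pi> a > a}) = ?e" unfolding exc_def by (metis Collect_conj_eq Int_commute Collect_mem_eq)
    have "{1..n} \<inter> - {a. \<pi> a > a} = {1..n} - ({1..n} \<inter> {a. \<pi> a > a})" by blast
    then have c2: "card ({1..n} \<inter> - {a. \<pi> a > a}) = n - ?e" using c1 by (simp add: card_Diff_subset)
    show ?thesis using c1 c2 by simp
  qed
  also have "\<dots> = smult (y ^ ?c) (smult (real ?e) (monom 1 ?e) + smult (real n - real ?e) (monom 1 (Suc ?e)))"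
  proof -
    have "card {i \<in> {1..n}. \<pi> i > i} \<le> card {1..n}" by (rule card_mono) auto
    then have le: "?e \<le> n" by (simp add: exc_def)
    have "\<And>k (p::real poly). of_nat k * p = smult (real k) p" by (simp add: of_nat_poly)
    then have "of_nat ?e * smult (y ^ ?c) (monom 1 ?e) + of_nat (n - ?e) * smult (y ^ ?c) (monom 1 (Suc ?e))
       = smult (real ?e) (smult (y ^ ?c) (monom 1 ?e)) + smult (real (n - ?e)) (smult (y ^ ?c) (monom 1 (Suc ?e)))"
      by presburger
    also have "real (n - ?e) = real n - real ?e" using le by (simp add: of_nat_diff)
    finally show ?thesis by (simp add: smult_add_right mult.commute)
  qed
  finally show ?thesis .
qed

lemma pderiv_sum': "pderiv (sum f A) = (\<Sum>a\<in>A. pderiv (f a))"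
  by (induction A rule: infinite_finite_induct) (auto simp: pderiv_add)

lemma Fpoly_Suc: "Fpoly (Suc n) y = [:y, real n:] * Fpoly n y + [:0,1,-1:] * pderiv (Fpoly n y)"
proof -
  let ?g = "\<lambda>m \<pi>. smult (y ^ cyc m \<pi>) (monom 1 (exc m \<pi>))"
  have ins: "{1..Suc n} = insert (Suc n) {1..n}" by auto
  have "Fpoly (Suc n) y = (\<Sum>b\<in>insert (Suc n) {1..n}. \<Sum>\<pi>\<in>{\<pi>. \<pi> permutes {1..n}}. ?g (Suc n) (transpose (Suc n) b \<circ> \<pi>))"
    unfolding Fpoly_def ins by (rule sum_over_permutations_insert) auto
  also have "\<dots> = (\<Sum>\<pi>\<in>{\<pi>. \<pi> permutes {1..n}}. ?g (Suc n) \<pi>)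
     + (\<Sum>b\<in>{1..n}. \<Sum>\<pi>\<in>{\<pi>. \<pi> permutes {1..n}}. ?g (Suc n) (transpose (Suc n) b \<circ> \<pi>))"
    by (simp add: sum.insert)
  also have "\<dots> = (\<Sum>\<pi>\<in>{\<pi>. \<pi> permutes {1..n}}. ?g (Suc n) \<pi>
     + (\<Sum>b\<in>{1..n}. ?g (Suc n) (transpose (Suc n) b \<circ> \<pi>)))"
    by (simp add: sum.distrib) (rule sum.swap)
  also have "\<dots> = (\<Sum>\<pi>\<in>{\<pi>. \<pi> permutes {1..n}}.
       smult (y ^ cyc n \<pi>) ([:y, real n:] * monom 1 (exc n \<pi>) + [:0,1,-1:] * pderiv (monom 1 (exc n \<pi>))))"
  proof (rule sum.cong[OF refl])
    fix \<pi> assume "\<pi> \<in> {\<pi>. \<pi> permutes {1..n}}"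
    then have perm: "\<pi> permutes {1..n}" by simp
    show "?g (Suc n) \<pi> + (\<Sum>b\<in>{1..n}. ?g (Suc n) (transpose (Suc n) b \<circ> \<pi>)) =
       smult (y ^ cyc n \<pi>) ([:y, real n:] * monom 1 (exc n \<pi>) + [:0,1,-1:] * pderiv (monom 1 (exc n \<pi>)))"
      unfolding inner_sum[OF perm] monom_identity fixed_case[OF perm]
      by (simp add: smult_add_right algebra_simps)
  qed
  also have "\<dots> = [:y, real n:] * Fpoly n y + [:0,1,-1:] * pderiv (Fpoly n y)"
    by (simp add: Fpoly_def pderiv_sum' pderiv_smult sum_distrib_left sum.distrib smult_add_right
        mult_smult_right)
  finally show ?thesis .
qed

lemma PQ_snd_Suc: "snd (PQ (Suc m)) = [:1, 2 * (real_of_int (int m - 1) + 1):] * snd (PQ m)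
   + [:0, 2, -2:] * pderiv (snd (PQ m))"
  by (cases "PQ m") (simp add: Let_def)

lemma Q_F: "snd (PQ m) = smult (2 ^ m) (Fpoly m (1/2))"
proof (induction m)
  case 0 then show ?case by (simp add: Fpoly_0)
next
  case (Suc m)
  have e1: "[:1, 2 * (real_of_int (int m - 1) + 1):] = smult 2 [:1/2, real m:]" by simp
  have e2: "[:0, 2, -2::real:] = smult 2 [:0, 1, -1:]" by simp
  show ?case unfolding PQ_snd_Suc Suc e1 e2 Fpoly_Suc
    by (simp add: pderiv_smult algebra_simps smult_add_right)
qed

theorem theorem2p4:
  fixes n :: int and x :: real
  assumes "n \<ge> -1"
  shows "poly (q_seq n) x = 2 ^ nat (n + 1) * F_biv (nat (n + 1)) x (1/2)"
  by (simp add: q_seq_def Q_F poly_Fpoly)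
end
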